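(* For every first-order formula $\phi(x_1,\dots,x_k)$ in the language $\{+,\times\}$ of arithmetic there is a first-order formula $\psi_\phi(x_1,\dots,x_k)$ in the language $\{\le,[1]+[1]\}$ such that for all $n_1,\dots,n_k\in\mathbb N$, $$\langle\mathbb N,+,\times\rangle\models\phi(n_1,\dots,n_k)\iff \mathbf Y^*\models\psi_\phi([n_1],\dots,[n_k]).$$
   Context: $\mathbb N$ is the set of non-negative integers with the usual addition and multiplication. $\mathcal P$ is the set of all integer partitions, including the empty partition $\emptyset$; a partition is a nonincreasing finite sequence of positive integers. $[n]$ denotes the partition with a single part $n$, with the convention $[0]=\emptyset$. Young's lattice $\mathbf Y=\langle\mathcal P,\le\rangle$ has $(s_1,\dots,s_r)\le(n_1,\dots,n_t)$ iff $r\le t$ and $s_i\le n_i$ for all $i\le r$; $\mathbf Y^*$ is $\mathbf Y$ with a constant symbol interpreted as the partition $[1]+[1]=(1,1)$. *)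

theory Defs
  imports Main
begin

definition is_partition :: "nat list \<Rightarrow> bool" where
  "is_partition xs \<longleftrightarrow> sorted_wrt (\<ge>) xs \<and> 0 \<notin> set xs"

definition single_part :: "nat \<Rightarrow> nat list" where
  "single_part n = (if n = 0 then [] else [n])"

definition young_le :: "nat list \<Rightarrow> nat list \<Rightarrow> bool" where
  "young_le xs ys \<longleftrightarrow> length xs \<le> length ys \<and> (\<forall>i<length xs. xs ! i \<le> ys ! i)"

text \<open>The constant of Y*: the partition [1]+[1] = (1,1).\<close>
definition one_one :: "nat list" where
  "one_one = [1, 1]"

datatype aterm = AVar nat | APlus aterm aterm | ATimes aterm aterm

datatype afm =
    AEq aterm aterm
  | ANeg afm
  | AConj afm afm
  | ADisj afm afm
  | AImp afm afm
  | AEx nat afm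
  | AAll nat afm

primrec aeval :: "(nat \<Rightarrow> nat) \<Rightarrow> aterm \<Rightarrow> nat" where
  "aeval e (AVar x) = e x"
| "aeval e (APlus s t) = aeval e s + aeval e t"
| "aeval e (ATimes s t) = aeval e s * aeval e t"

primrec atvars :: "aterm \<Rightarrow> nat set" where
  "atvars (AVar x) = {x}"
| "atvars (APlus s t) = atvars s \<union> atvars t"
| "atvars (ATimes s t) = atvars s \<union> atvars t"

primrec sat_N :: "(nat \<Rightarrow> nat) \<Rightarrow> afm \<Rightarrow> bool" where
  "sat_N e (AEq s t) = (aeval e s = aeval e t)"
| "sat_N e (ANeg f) = (\<not> sat_N e f)"
| "sat_N e (AConj f g) = (sat_N e f \<and> sat_N e g)"
| "sat_N e (ADisj f g) = (sat_N e f \<or> sat_N e g)"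
| "sat_N e (AImp f g) = (sat_N e f \<longrightarrow> sat_N e g)"
| "sat_N e (AEx x f) = (\<exists>n. sat_N (e(x := n)) f)"
| "sat_N e (AAll x f) = (\<forall>n. sat_N (e(x := n)) f)"

primrec afree :: "afm \<Rightarrow> nat set" where
  "afree (AEq s t) = atvars s \<union> atvars t"
| "afree (ANeg f) = afree f"
| "afree (AConj f g) = afree f \<union> afree g"
| "afree (ADisj f g) = afree f \<union> afree g"
| "afree (AImp f g) = afree f \<union> afree g"
| "afree (AEx x f) = afree f - {x}"
| "afree (AAll x f) = afree f - {x}"

datatype yterm = YVar nat | YConst

datatype yfm =
    YEq yterm yterm
  | YLe yterm yterm
  | YNeg yfm
  | YConj yfm yfm
  | YDisj yfm yfm
  | YImp yfm yfm
  | YEx nat yfm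
  | YAll nat yfm

primrec yeval :: "(nat \<Rightarrow> nat list) \<Rightarrow> yterm \<Rightarrow> nat list" where
  "yeval e (YVar x) = e x"
| "yeval e YConst = one_one"

primrec ytvars :: "yterm \<Rightarrow> nat set" where
  "ytvars (YVar x) = {x}"
| "ytvars YConst = {}"

primrec sat_Y :: "(nat \<Rightarrow> nat list) \<Rightarrow> yfm \<Rightarrow> bool" where
  "sat_Y e (YEq s t) = (yeval e s = yeval e t)"
| "sat_Y e (YLe s t) = young_le (yeval e s) (yeval e t)"
| "sat_Y e (YNeg f) = (\<not> sat_Y e f)"
| "sat_Y e (YConj f g) = (sat_Y e f \<and> sat_Y e g)"
| "sat_Y e (YDisj f g) = (sat_Y e f \<or> sat_Y e g)"
| "sat_Y e (YImp f g) = (sat_Y e f \<longrightarrow> sat_Y e g)"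
| "sat_Y e (YEx x f) = (\<exists>p. is_partition p \<and> sat_Y (e(x := p)) f)"
| "sat_Y e (YAll x f) = (\<forall>p. is_partition p \<longrightarrow> sat_Y (e(x := p)) f)"

primrec yfree :: "yfm \<Rightarrow> nat set" where
  "yfree (YEq s t) = ytvars s \<union> ytvars t"
| "yfree (YLe s t) = ytvars s \<union> ytvars t"
| "yfree (YNeg f) = yfree f"
| "yfree (YConj f g) = yfree f \<union> yfree g"
| "yfree (YDisj f g) = yfree f \<union> yfree g"
| "yfree (YImp f g) = yfree f \<union> yfree g"
| "yfree (YEx x f) = yfree f - {x}"
| "yfree (YAll x f) = yfree f - {x}"

end

theory Submission
  imports Defs
begin


abbreviation V where "V \<equiv> YVar"
definition YLt where "YLt a b = YConj (YLe a b) (YNeg (YEq a b))"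

definition FE :: "nat \<Rightarrow> yfm" where "FE x = YAll (x+1) (YLe (V x) (V (x+1)))"
definition FRow :: "nat \<Rightarrow> yfm" where "FRow x = YNeg (YLe YConst (V x))"
definition FCol :: "nat \<Rightarrow> yfm" where
 "FCol x = YAll (x+1) (YImp (FRow (x+1)) (YImp (YLe (V(x+1)) (V x)) (YLe (V (x+1)) YConst)))"

definition isE where "isE x \<longleftrightarrow> (\<forall>p. is_partition p \<longrightarrow> young_le x p)"
definition isRow where "isRow x \<longleftrightarrow> \<not> young_le one_one x"
definition isCol where "isCol x \<longleftrightarrow> (\<forall>p. is_partition p \<longrightarrow> isRow p \<longrightarrow> young_le p x \<longrightarrow> young_le p one_one)"

lemma sat_FE[simp]: "sat_Y e (FE x) = isE (e x)" by (simp add: FE_def isE_def)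
lemma sat_FRow[simp]: "sat_Y e (FRow x) = isRow (e x)" by (simp add: FRow_def isRow_def)
lemma sat_FCol[simp]: "sat_Y e (FCol x) = isCol (e x)" by (simp add: FCol_def isCol_def)
lemma sat_YLt[simp]: "sat_Y e (YLt a b) = (young_le (yeval e a) (yeval e b) \<and> yeval e a \<noteq> yeval e b)"
  by (simp add: YLt_def)

definition FBox :: "nat \<Rightarrow> nat \<Rightarrow> nat \<Rightarrow> yfm" where
 "FBox y a c = (let b = y+a+c+1 in YConj (YAll b (YImp (FRow b) (YImp (YLe (V b) (V y)) (YLe (V b) (V a)))))
    (YAll b (YImp (FCol b) (YImp (YLe (V b) (V y)) (YLe (V b) (V c))))))"
definition Box where "Box y a c \<longleftrightarrow> (\<forall>p. is_partition p \<longrightarrow> isRow p \<longrightarrow> young_le p y \<longrightarrow> young_le p a) \<and>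
   (\<forall>p. is_partition p \<longrightarrow> isCol p \<longrightarrow> young_le p y \<longrightarrow> young_le p c)"
lemma sat_FBox[simp]: "sat_Y e (FBox y a c) = Box (e y) (e a) (e c)"
  by (simp add: FBox_def Box_def Let_def)

definition FG :: "nat \<Rightarrow> nat \<Rightarrow> nat \<Rightarrow> yfm" where
 "FG x a c = (let r = x+a+c+1 in YEx r (YConj (YLe (V r) (V x)) (YConj (FBox r a c)
     (YAll (r+1) (YImp (FBox (r+1) a c) (YLe (V (r+1)) (V r)))))))"
definition G where "G x a c \<longleftrightarrow> (\<exists>r. is_partition r \<and> young_le r x \<and> Box r a c \<and>
     (\<forall>y. is_partition y \<longrightarrow> Box y a c \<longrightarrow> young_le y r))"
lemma sat_FG[simp]: "sat_Y e (FG x a c) = G (e x) (e a) (e c)"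
  by (simp add: FG_def G_def Let_def)

lemma yfree_FE[simp]: "yfree (FE x) = {x}" by (auto simp: FE_def)
lemma yfree_FRow[simp]: "yfree (FRow x) = {x}" by (auto simp: FRow_def)
lemma yfree_FCol[simp]: "yfree (FCol x) = {x}" by (auto simp: FCol_def)
lemma yfree_YLt[simp]: "yfree (YLt a b) = ytvars a \<union> ytvars b" by (auto simp: YLt_def)
lemma yfree_FBox: "yfree (FBox y a c) \<subseteq> {y,a,c}" by (auto simp: FBox_def Let_def)
lemma yfree_FG: "yfree (FG x a c) \<subseteq> {x,a,c}" using yfree_FBox by (fastforce simp: FG_def Let_def)

definition FVal :: "nat \<Rightarrow> nat \<Rightarrow> nat \<Rightarrow> yfm" where
 "FVal x c a = (let b = x+c+a+1 in YConj (FRow a) (YConj (FG x a c)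
    (YAll b (YImp (FRow b) (YImp (FG x b c) (YLe (V b) (V a)))))))"
definition Val where "Val x c a \<longleftrightarrow> isRow a \<and> G x a c \<and>
   (\<forall>b. is_partition b \<longrightarrow> isRow b \<longrightarrow> G x b c \<longrightarrow> young_le b a)"
lemma sat_FVal[simp]: "sat_Y e (FVal x c a) = Val (e x) (e c) (e a)"
  by (simp add: FVal_def Val_def Let_def)
lemma yfree_FVal: "yfree (FVal x c a) \<subseteq> {x,c,a}" using yfree_FG by (fastforce simp: FVal_def Let_def)

definition FSR :: "nat \<Rightarrow> nat \<Rightarrow> yfm" where
 "FSR a b = (let w = a+b+1 in YConj (FRow a) (YConj (FRow b) (YConj (YLt (V a) (V b))
    (YAll w (YImp (FRow w) (YImp (YLe (V a) (V w)) (YImp (YLe (V w) (V b)) (YDisj (YEq (V w) (V a)) (YEq (V w) (V b))))))))))"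
definition SR where "SR a b \<longleftrightarrow> isRow a \<and> isRow b \<and> young_le a b \<and> a \<noteq> b \<and>
   (\<forall>w. is_partition w \<longrightarrow> isRow w \<longrightarrow> young_le a w \<longrightarrow> young_le w b \<longrightarrow> w = a \<or> w = b)"
lemma sat_FSR[simp]: "sat_Y e (FSR a b) = SR (e a) (e b)"
  by (simp add: FSR_def SR_def Let_def)
lemma yfree_FSR: "yfree (FSR a b) \<subseteq> {a,b}" by (auto simp: FSR_def Let_def)

definition FSC :: "nat \<Rightarrow> nat \<Rightarrow> yfm" where
 "FSC a b = (let w = a+b+1 in YConj (FCol a) (YConj (FCol b) (YConj (YLt (V a) (V b))
    (YAll w (YImp (FCol w) (YImp (YLe (V a) (V w)) (YImp (YLe (V w) (V b)) (YDisj (YEq (V w) (V a)) (YEq (V w) (V b))))))))))"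
definition SC where "SC a b \<longleftrightarrow> isCol a \<and> isCol b \<and> young_le a b \<and> a \<noteq> b \<and>
   (\<forall>w. is_partition w \<longrightarrow> isCol w \<longrightarrow> young_le a w \<longrightarrow> young_le w b \<longrightarrow> w = a \<or> w = b)"
lemma sat_FSC[simp]: "sat_Y e (FSC a b) = SC (e a) (e b)"
  by (simp add: FSC_def SC_def Let_def)
lemma yfree_FSC: "yfree (FSC a b) \<subseteq> {a,b}" by (auto simp: FSC_def Let_def)

definition FLen :: "nat \<Rightarrow> nat \<Rightarrow> yfm" where
 "FLen x l = (let d = x+l+1 in YConj (FCol l) (YConj (YLe (V l) (V x))
    (YAll d (YImp (FCol d) (YImp (YLe (V d) (V x)) (YLe (V d) (V l)))))))"
definition Len where "Len x l \<longleftrightarrow> isCol l \<and> young_le l x \<and>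
   (\<forall>d. is_partition d \<longrightarrow> isCol d \<longrightarrow> young_le d x \<longrightarrow> young_le d l)"
lemma sat_FLen[simp]: "sat_Y e (FLen x l) = Len (e x) (e l)"
  by (simp add: FLen_def Len_def Let_def)
lemma yfree_FLen: "yfree (FLen x l) \<subseteq> {x,l}" by (auto simp: FLen_def Let_def)

definition FOne :: "nat \<Rightarrow> yfm" where "FOne ov = YConj (FRow ov) (YConj (FCol ov) (YNeg (FE ov)))"
definition One where "One ov \<longleftrightarrow> isRow ov \<and> isCol ov \<and> \<not> isE ov"
lemma sat_FOne[simp]: "sat_Y e (FOne x) = One (e x)" by (simp add: FOne_def One_def)
lemma yfree_FOne: "yfree (FOne x) \<subseteq> {x}" by (auto simp: FOne_def)

definition FStepS :: "nat \<Rightarrow> yfm" where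
 "FStepS x = YAll (x+1) (YAll (x+2) (YImp (FCol (x+1)) (YImp (FCol (x+2)) (YImp (YNeg (FE (x+1)))
   (YImp (FSC (x+1) (x+2)) (YImp (YLe (V (x+2)) (V x)) (YEx (x+3) (YEx (x+4)
     (YConj (FVal x (x+1) (x+3)) (YConj (FVal x (x+2) (x+4)) (FSR (x+4) (x+3))))))))))))"
definition StepS where "StepS x \<longleftrightarrow> (\<forall>c. is_partition c \<longrightarrow> (\<forall>d. is_partition d \<longrightarrow>
   isCol c \<longrightarrow> isCol d \<longrightarrow> \<not> isE c \<longrightarrow> SC c d \<longrightarrow> young_le d x \<longrightarrow>
   (\<exists>u. is_partition u \<and> (\<exists>v. is_partition v \<and> Val x c u \<and> Val x d v \<and> SR v u))))"
lemma sat_FStepS[simp]: "sat_Y e (FStepS x) = StepS (e x)" by (simp add: FStepS_def StepS_def)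
lemma yfree_FStepS: "yfree (FStepS x) \<subseteq> {x}"
  using yfree_FVal yfree_FSR yfree_FSC by (fastforce simp: FStepS_def)

definition FProgS :: "nat \<Rightarrow> nat \<Rightarrow> nat \<Rightarrow> nat \<Rightarrow> yfm" where
 "FProgS x l lo hi = (let ov = x+l+lo+hi+1 in YConj (FLen x l) (YConj (YNeg (FE l)) (YConj (FStepS x)
    (YConj (FVal x l lo) (YEx ov (YConj (FOne ov) (FVal x ov hi)))))))"
definition ProgS where "ProgS x l lo hi \<longleftrightarrow> Len x l \<and> \<not> isE l \<and> StepS x \<and> Val x l lo \<and>
    (\<exists>ov. is_partition ov \<and> One ov \<and> Val x ov hi)"
lemma sat_FProgS[simp]: "sat_Y e (FProgS x l lo hi) = ProgS (e x) (e l) (e lo) (e hi)"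
  by (simp add: FProgS_def ProgS_def Let_def)
lemma yfree_FProgS: "yfree (FProgS x l lo hi) \<subseteq> {x,l,lo,hi}"
  using yfree_FVal yfree_FLen yfree_FStepS yfree_FOne by (fastforce simp: FProgS_def Let_def)

definition FT :: "nat \<Rightarrow> nat \<Rightarrow> yfm" where
 "FT b l = (let x = b+l+1 in YDisj (YConj (FE b) (FE l)) (YEx x (YEx (x+1) (YConj (FOne (x+1)) (FProgS x l (x+1) b)))))"
definition T where "T b l \<longleftrightarrow> (isE b \<and> isE l) \<or> (\<exists>x. is_partition x \<and> (\<exists>ov. is_partition ov \<and> One ov \<and> ProgS x l ov b))"
lemma sat_FT[simp]: "sat_Y e (FT b l) = T (e b) (e l)"
  by (simp add: FT_def T_def Let_def)
lemma yfree_FT: "yfree (FT b l) \<subseteq> {b,l}"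
  using yfree_FProgS yfree_FOne by (fastforce simp: FT_def Let_def)

definition FAdd :: "nat \<Rightarrow> nat \<Rightarrow> nat \<Rightarrow> yfm" where
 "FAdd a b c = (let l = a+b+c+1 in YDisj (YConj (FE b) (YEq (V c) (V a)))
    (YEx l (YEx (l+1) (YEx (l+2) (YConj (FT b l) (YConj (FSR a (l+2)) (FProgS (l+1) l (l+2) c)))))))"
definition Add where "Add a b c \<longleftrightarrow> (isE b \<and> c = a) \<or> (\<exists>l. is_partition l \<and> (\<exists>x. is_partition x \<and>
   (\<exists>a'. is_partition a' \<and> T b l \<and> SR a a' \<and> ProgS x l a' c)))"
lemma sat_FAdd[simp]: "sat_Y e (FAdd a b c) = Add (e a) (e b) (e c)"
  by (simp add: FAdd_def Add_def Let_def)
lemma yfree_FAdd: "yfree (FAdd a b c) \<subseteq> {a,b,c}"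
  using yfree_FProgS yfree_FT yfree_FSR by (fastforce simp: FAdd_def Let_def)

definition FStepA :: "nat \<Rightarrow> nat \<Rightarrow> yfm" where
 "FStepA x a = (let z = x+a+1 in YAll z (YAll (z+1) (YImp (FCol z) (YImp (FCol (z+1)) (YImp (YNeg (FE z))
   (YImp (FSC z (z+1)) (YImp (YLe (V (z+1)) (V x)) (YEx (z+2) (YEx (z+3)
     (YConj (FVal x z (z+2)) (YConj (FVal x (z+1) (z+3)) (FAdd (z+3) a (z+2)))))))))))))"
definition StepA where "StepA x a \<longleftrightarrow> (\<forall>c. is_partition c \<longrightarrow> (\<forall>d. is_partition d \<longrightarrow>
   isCol c \<longrightarrow> isCol d \<longrightarrow> \<not> isE c \<longrightarrow> SC c d \<longrightarrow> young_le d x \<longrightarrow>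
   (\<exists>u. is_partition u \<and> (\<exists>v. is_partition v \<and> Val x c u \<and> Val x d v \<and> Add v a u))))"
lemma sat_FStepA[simp]: "sat_Y e (FStepA x a) = StepA (e x) (e a)" by (simp add: FStepA_def StepA_def Let_def)
lemma yfree_FStepA: "yfree (FStepA x a) \<subseteq> {x,a}"
  using yfree_FVal yfree_FAdd yfree_FSC by (fastforce simp: FStepA_def Let_def)

definition FProgA :: "nat \<Rightarrow> nat \<Rightarrow> nat \<Rightarrow> nat \<Rightarrow> nat \<Rightarrow> yfm" where
 "FProgA x l lo hi a = (let ov = x+l+lo+hi+a+1 in YConj (FLen x l) (YConj (YNeg (FE l)) (YConj (FStepA x a)
    (YConj (FVal x l lo) (YEx ov (YConj (FOne ov) (FVal x ov hi)))))))"
definition ProgA where "ProgA x l lo hi a \<longleftrightarrow> Len x l \<and> \<not> isE l \<and> StepA x a \<and> Val x l lo \<and>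
    (\<exists>ov. is_partition ov \<and> One ov \<and> Val x ov hi)"
lemma sat_FProgA[simp]: "sat_Y e (FProgA x l lo hi a) = ProgA (e x) (e l) (e lo) (e hi) (e a)"
  by (simp add: FProgA_def ProgA_def Let_def)
lemma yfree_FProgA: "yfree (FProgA x l lo hi a) \<subseteq> {x,l,lo,hi,a}"
  using yfree_FVal yfree_FLen yfree_FStepA yfree_FOne by (fastforce simp: FProgA_def Let_def)

definition FMul :: "nat \<Rightarrow> nat \<Rightarrow> nat \<Rightarrow> yfm" where
 "FMul a b c = (let l = a+b+c+1 in YDisj (YConj (YDisj (FE a) (FE b)) (FE c))
    (YConj (YNeg (FE a)) (YEx l (YEx (l+1) (YConj (FT b l) (FProgA (l+1) l a c a))))))"
definition Mul where "Mul a b c \<longleftrightarrow> ((isE a \<or> isE b) \<and> isE c) \<or> (\<not> isE a \<and> (\<exists>l. is_partition l \<and> (\<exists>x. is_partition x \<and>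
   T b l \<and> ProgA x l a c a)))"
lemma sat_FMul[simp]: "sat_Y e (FMul a b c) = Mul (e a) (e b) (e c)"
  by (simp add: FMul_def Mul_def Let_def)
lemma yfree_FMul: "yfree (FMul a b c) \<subseteq> {a,b,c}"
  using yfree_FProgA yfree_FT by (fastforce simp: FMul_def Let_def)



abbreviation sp where "sp \<equiv> single_part"
abbreviation rep where "rep m \<equiv> replicate m (Suc 0)"
definition pp :: "nat list \<Rightarrow> nat \<Rightarrow> nat" where "pp x i = (if i < length x then x!i else 0)"

lemma part_pos: "is_partition x \<Longrightarrow> i < length x \<Longrightarrow> 0 < x!i"
  unfolding is_partition_def by (metis gr0I nth_mem)
lemma part_mono: "is_partition x \<Longrightarrow> i \<le> j \<Longrightarrow> j < length x \<Longrightarrow> x!j \<le> x!i"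
  unfolding is_partition_def by (metis le_eq_less_or_eq order_refl sorted_wrt_iff_nth_less)
lemma part_sp[simp]: "is_partition (sp n)" by (simp add: is_partition_def single_part_def)
lemma part_rep[simp]: "is_partition (rep m)" by (simp add: is_partition_def sorted_wrt_iff_nth_less)
lemma part_nil[simp]: "is_partition []" by (simp add: is_partition_def)

lemma young_trans: "young_le x y \<Longrightarrow> young_le y z \<Longrightarrow> young_le x z"
  unfolding young_le_def by (meson le_trans order.strict_trans2)
lemma young_refl[simp]: "young_le x x" by (simp add: young_le_def)
lemma young_nil[simp]: "young_le [] x" by (simp add: young_le_def)

lemma sp_inj[simp]: "sp a = sp b \<longleftrightarrow> a = b" by (simp add: single_part_def)
lemma sp_nil[simp]: "sp a = [] \<longleftrightarrow> a = 0" "[] = sp a \<longleftrightarrow> a = 0" by (auto simp add: single_part_def)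
lemma le_sp_x: "young_le (sp n) x \<longleftrightarrow> n = 0 \<or> (x \<noteq> [] \<and> n \<le> x!0)"
  by (cases x) (auto simp: young_le_def single_part_def)
lemma le_sp_sp[simp]: "young_le (sp a) (sp b) \<longleftrightarrow> a \<le> b"
  by (auto simp: young_le_def single_part_def)
lemma le_rep_x: "is_partition x \<Longrightarrow> young_le (rep m) x \<longleftrightarrow> m \<le> length x"
  by (auto simp: young_le_def Suc_leI part_pos)
lemma le_rep_rep[simp]: "young_le (rep a) (rep b) \<longleftrightarrow> a \<le> b" by (auto simp add: young_le_def)
lemma le_oo: "is_partition x \<Longrightarrow> young_le one_one x \<longleftrightarrow> 2 \<le> length x"
  using part_pos[of x 0] part_pos[of x 1] by (auto simp: young_le_def one_one_def less_Suc_eq Suc_le_eq) (metis length_0_conv not_numeral_le_zero)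

lemma isE_iff[simp]: "isE x \<longleftrightarrow> x = []"
  unfolding isE_def by (metis le_zero_eq length_0_conv part_nil young_le_def young_nil)

lemma row_iff: "is_partition x \<Longrightarrow> isRow x \<longleftrightarrow> (\<exists>n. x = sp n)"
proof -
  assume p: "is_partition x"
  have "isRow x \<longleftrightarrow> length x \<le> 1" using le_oo[OF p] by (auto simp add: isRow_def)
  also have "\<dots> \<longleftrightarrow> (\<exists>n. x = sp n)"
  proof
    assume "length x \<le> 1"
    then consider "x = []" | a where "x = [a]" by (cases x) auto
    then show "\<exists>n. x = sp n"
    proof cases
      case 1 then show ?thesis by (metis sp_nil(2))
    next
      case 2 with p part_pos[OF p, of 0] show ?thesis by (auto simp: single_part_def)
    qed
  qed (auto simp: single_part_def)
  finally show ?thesis .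
qed

lemma sp_le_oo: "young_le (sp n) one_one \<longleftrightarrow> n \<le> 1"
  by (auto simp: le_sp_x one_one_def)

lemma col_iff: "is_partition x \<Longrightarrow> isCol x \<longleftrightarrow> (\<exists>m. x = rep m)"
proof
  assume p: "is_partition x" and c: "isCol x"
  show "\<exists>m. x = rep m"
  proof (cases "x = []")
    case True then show ?thesis by (metis replicate_0)
  next
    case False
    have "young_le (sp (x!0)) x" using False by (simp add: le_sp_x)
    then have "young_le (sp (x!0)) one_one" using c row_iff[of "sp (x!0)"] unfolding isCol_def by auto
    then have "x!0 \<le> 1" by (simp add: sp_le_oo)
    then have "\<forall>i<length x. x!i = 1" using part_mono[OF p, of 0] part_pos[OF p]
      by (metis le0 le_antisym less_one not_less)
    then have "x = rep (length x)" by (simp add: list_eq_iff_nth_eq)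
    then show ?thesis by blast
  qed
next
  assume "is_partition x" "\<exists>m. x = rep m"
  then obtain m where x: "x = rep m" by blast
  show "isCol x" unfolding isCol_def
  proof (intro allI impI)
    fix p assume "is_partition p" "isRow p" "young_le p x"
    then obtain n where "p = sp n" using row_iff by blast
    with \<open>young_le p x\<close> x show "young_le p one_one"
      by (cases m) (auto simp: le_sp_x sp_le_oo one_one_def)
  qed
qed

lemma rep_inj[simp]: "rep a = rep b \<longleftrightarrow> a = b" by (metis length_replicate)
lemma sp_rep: "sp n = rep m \<longleftrightarrow> (n = 0 \<and> m = 0) \<or> (n = 1 \<and> m = 1)"
  by (cases m) (auto simp: single_part_def)



lemma ex_row: "(\<exists>p. is_partition p \<and> isRow p \<and> P p) \<longleftrightarrow> (\<exists>n. P (sp n))"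
  by (metis part_sp row_iff)
lemma all_row: "(\<forall>p. is_partition p \<longrightarrow> isRow p \<longrightarrow> P p) \<longleftrightarrow> (\<forall>n. P (sp n))"
  using row_iff by auto
lemma all_col: "(\<forall>p. is_partition p \<longrightarrow> isCol p \<longrightarrow> P p) \<longleftrightarrow> (\<forall>n. P (rep n))"
  by (metis part_rep col_iff)

lemma pp0: "is_partition y \<Longrightarrow> (\<forall>n. young_le (sp n) y \<longrightarrow> n \<le> v) \<longleftrightarrow> pp y 0 \<le> v"
  by (auto simp: le_sp_x pp_def)

lemma Box_iff: "is_partition y \<Longrightarrow> Box y (sp v) (rep m) \<longleftrightarrow> pp y 0 \<le> v \<and> length y \<le> m"
  unfolding Box_def all_row all_col using pp0[of y v]
  by (auto simp: le_rep_x)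

definition rect :: "nat \<Rightarrow> nat \<Rightarrow> nat list" where "rect v m = (if v = 0 then [] else replicate m v)"

lemma part_rect[simp]: "is_partition (rect v m)"
  by (auto simp: rect_def is_partition_def sorted_wrt_iff_nth_less)

lemma box_le_rect: "is_partition y \<Longrightarrow> pp y 0 \<le> v \<Longrightarrow> length y \<le> m \<Longrightarrow> young_le y (rect v m)"
proof -
  assume p: "is_partition y" and a: "pp y 0 \<le> v" "length y \<le> m"
  have "\<forall>i<length y. y!i \<le> v"
  proof (intro allI impI)
    fix i assume i: "i < length y"
    then have "y!i \<le> y!0" using part_mono[OF p, of 0 i] by simp
    moreover have "y!0 \<le> v" using a i by (auto simp: pp_def split: if_splits)
    ultimately show "y!i \<le> v" by simp
  qed
  moreover have "y \<noteq> [] \<Longrightarrow> v \<noteq> 0" using a part_pos[OF p, of 0] by (auto simp: pp_def)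
  ultimately show ?thesis using a by (auto simp: young_le_def rect_def)
qed

lemma rect_box: "pp (rect v m) 0 \<le> v \<and> length (rect v m) \<le> m"
  by (auto simp: rect_def pp_def)

lemma G_rect: "is_partition x \<Longrightarrow> G x (sp v) (rep m) \<longleftrightarrow> young_le (rect v m) x"
proof
  assume p: "is_partition x" "G x (sp v) (rep m)"
  then obtain r where r: "is_partition r" "young_le r x" "Box r (sp v) (rep m)"
    "\<forall>y. is_partition y \<longrightarrow> Box y (sp v) (rep m) \<longrightarrow> young_le y r" unfolding G_def by blast
  have "young_le (rect v m) r" using r(4) Box_iff[of "rect v m"] rect_box by simp
  then show "young_le (rect v m) x" using r(2) young_trans by blast
next
  assume p: "is_partition x" "young_le (rect v m) x"
  show "G x (sp v) (rep m)" unfolding G_def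
    apply (rule exI[of _ "rect v m"])
    using p rect_box Box_iff box_le_rect by auto
qed

lemma rect_le: "is_partition x \<Longrightarrow> 0 < v \<Longrightarrow> 0 < m \<Longrightarrow>
   young_le (rect v m) x \<longleftrightarrow> m \<le> length x \<and> v \<le> x!(m-1)"
proof
  assume "is_partition x" "0 < v" "0 < m" "young_le (rect v m) x"
  then show "m \<le> length x \<and> v \<le> x!(m-1)" by (auto simp: rect_def young_le_def)
next
  assume p: "is_partition x" "0 < v" "0 < m" "m \<le> length x \<and> v \<le> x!(m-1)"
  then show "young_le (rect v m) x"
    apply (auto simp: rect_def young_le_def)
    subgoal for i using p(3) le_trans[OF _ part_mono[OF p(1), of i "m-1"]] by auto
    done
qed

lemma G_val: "is_partition x \<Longrightarrow> 0 < m \<Longrightarrow> G x (sp b) (rep m) \<longleftrightarrow> b \<le> pp x (m-1)"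
  using G_rect[of x b m] rect_le[of x b m] part_pos[of x "m-1"]
  by (cases "b = 0") (auto simp: pp_def rect_def)

lemma Val_iff: "is_partition x \<Longrightarrow> is_partition a \<Longrightarrow> 0 < m \<Longrightarrow> Val x (rep m) a \<longleftrightarrow> a = sp (pp x (m-1))"
proof -
  assume p: "is_partition x" "is_partition a" "0 < m"
  have "Val x (rep m) a \<longleftrightarrow> (\<exists>n. a = sp n \<and> n \<le> pp x (m-1) \<and> (\<forall>b. b \<le> pp x (m-1) \<longrightarrow> b \<le> n))"
    unfolding Val_def all_row using row_iff[OF p(2)] G_val[OF p(1) p(3)] by auto
  also have "\<dots> \<longleftrightarrow> a = sp (pp x (m-1))" by (auto intro: le_antisym)
  finally show ?thesis .
qed

lemma SR_iff: "is_partition a \<Longrightarrow> is_partition b \<Longrightarrow> SR a b \<longleftrightarrow> (\<exists>n. a = sp n \<and> b = sp (Suc n))"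
proof -
  assume p: "is_partition a" "is_partition b"
  have "SR a b \<longleftrightarrow> (\<exists>n k. a = sp n \<and> b = sp k \<and> n \<le> k \<and> n \<noteq> k \<and> (\<forall>j. n \<le> j \<longrightarrow> j \<le> k \<longrightarrow> j = n \<or> j = k))"
    unfolding SR_def all_row using row_iff p by auto
  also have "\<dots> \<longleftrightarrow> (\<exists>n. a = sp n \<and> b = sp (Suc n))"
    apply (rule iffI)
     apply (metis Suc_leI le_eq_less_or_eq lessI not_less_eq_eq)
    by auto
  finally show ?thesis .
qed

lemma SR_sp[simp]: "SR (sp a) (sp b) \<longleftrightarrow> b = Suc a" by (simp add: SR_iff)

lemma SC_iff: "is_partition a \<Longrightarrow> is_partition b \<Longrightarrow> SC a b \<longleftrightarrow> (\<exists>n. a = rep n \<and> b = rep (Suc n))"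
proof -
  assume p: "is_partition a" "is_partition b"
  have "SC a b \<longleftrightarrow> (\<exists>n k. a = rep n \<and> b = rep k \<and> n \<le> k \<and> n \<noteq> k \<and> (\<forall>j. n \<le> j \<longrightarrow> j \<le> k \<longrightarrow> j = n \<or> j = k))"
    unfolding SC_def all_col using col_iff p by auto
  also have "\<dots> \<longleftrightarrow> (\<exists>n. a = rep n \<and> b = rep (Suc n))"
    apply (rule iffI)
     apply (metis Suc_leI le_eq_less_or_eq lessI not_less_eq_eq)
    by (auto simp del: replicate_Suc)
  finally show ?thesis .
qed

lemma Len_iff: "is_partition x \<Longrightarrow> is_partition l \<Longrightarrow> Len x l \<longleftrightarrow> l = rep (length x)"
proof -
  assume p: "is_partition x" "is_partition l"
  have "Len x l \<longleftrightarrow> (\<exists>m. l = rep m \<and> m \<le> length x \<and> (\<forall>d. d \<le> length x \<longrightarrow> d \<le> m))"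
    unfolding Len_def all_col using col_iff p le_rep_x[OF p(1)] by auto
  also have "\<dots> \<longleftrightarrow> l = rep (length x)" by (auto intro: le_antisym)
  finally show ?thesis .
qed

lemma One_iff: "is_partition a \<Longrightarrow> One a \<longleftrightarrow> a = [1]"
proof -
  assume p: "is_partition a"
  have "One a \<longleftrightarrow> (\<exists>n m. a = sp n \<and> a = rep m \<and> a \<noteq> [])"
    unfolding One_def using row_iff[OF p] col_iff[OF p] by auto
  also have "\<dots> \<longleftrightarrow> a = [1]"
  proof
    assume "\<exists>n m. a = sp n \<and> a = rep m \<and> a \<noteq> []"
    then obtain n m where "a = sp n" "sp n = rep m" "a \<noteq> []" by metis
    then show "a = [1]" using sp_rep[of n m] by (auto simp: single_part_def)
  next
    assume "a = [1]" then show "\<exists>n m. a = sp n \<and> a = rep m \<and> a \<noteq> []"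
      by (intro exI[of _ 1]) (auto simp: single_part_def)
  qed
  finally show ?thesis .
qed



lemma sp_one[simp]: "sp k = [Suc 0] \<longleftrightarrow> k = 1" "[Suc 0] = sp k \<longleftrightarrow> k = 1"
  by (auto simp: single_part_def)

lemma p1[simp]: "is_partition [Suc 0]" using part_rep[of 1] by simp

lemma step_gen:
  assumes p: "is_partition x"
  shows "(\<forall>c. is_partition c \<longrightarrow> (\<forall>d. is_partition d \<longrightarrow> isCol c \<longrightarrow> isCol d \<longrightarrow> \<not> isE c \<longrightarrow> SC c d \<longrightarrow> young_le d x \<longrightarrow>
   (\<exists>u. is_partition u \<and> (\<exists>v. is_partition v \<and> Val x c u \<and> Val x d v \<and> R v u))))
   \<longleftrightarrow> (\<forall>i. Suc i < length x \<longrightarrow> R (sp (x!Suc i)) (sp (x!i)))" (is "?L \<longleftrightarrow> ?R")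
proof
  assume L: ?L
  show ?R
  proof (intro allI impI)
    fix i assume i: "Suc i < length x"
    have "SC (rep (Suc i)) (rep (Suc (Suc i)))" using SC_iff by (auto simp del: replicate_Suc)
    moreover have "young_le (rep (Suc (Suc i))) x" using le_rep_x[OF p] i by (simp del: replicate_Suc)
    moreover have "isCol (rep (Suc i))" "isCol (rep (Suc (Suc i)))" using col_iff by (auto simp del: replicate_Suc)
    ultimately obtain u v where uv: "is_partition u" "is_partition v" "Val x (rep (Suc i)) u"
      "Val x (rep (Suc (Suc i))) v" "R v u"
      using L[rule_format, of "rep (Suc i)" "rep (Suc (Suc i))"] by (auto simp del: replicate_Suc)
    have "u = sp (x!i)" using Val_iff[OF p uv(1), of "Suc i"] uv(3) i by (simp add: pp_def del: replicate_Suc)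
    moreover have "v = sp (x!Suc i)" using Val_iff[OF p uv(2), of "Suc (Suc i)"] uv(4) i by (simp add: pp_def del: replicate_Suc)
    ultimately show "R (sp (x!Suc i)) (sp (x!i))" using uv(5) by simp
  qed
next
  assume R: ?R
  show ?L
  proof (intro allI impI)
    fix c d assume cd: "is_partition c" "is_partition d" "isCol c" "isCol d" "\<not> isE c" "SC c d" "young_le d x"
    obtain n where n: "c = rep n" "d = rep (Suc n)" using SC_iff cd by blast
    have n1: "0 < n" using cd(5) n by (cases n) auto
    have len: "Suc n \<le> length x" using le_rep_x[OF p, of "Suc n"] cd(7) n by (simp del: replicate_Suc)
    have len': "n - 1 < length x" using len by simp
    have "R (sp (x!n)) (sp (x!(n-1)))" using R[rule_format, of "n-1"] n1 len by simp
    moreover have "Val x c (sp (x!(n-1)))" using Val_iff[OF p, of "sp (x!(n-1))" n] n1 len' n by (simp add: pp_def)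
    moreover have "Val x d (sp (x!n))" using Val_iff[OF p, of "sp (x!n)" "Suc n"] n1 len n by (simp add: pp_def del: replicate_Suc)
    ultimately show "\<exists>u. is_partition u \<and> (\<exists>v. is_partition v \<and> Val x c u \<and> Val x d v \<and> R v u)" using part_sp by blast
  qed
qed

lemma frame:
  assumes p: "is_partition x" "is_partition l" "is_partition lo" "is_partition hi"
  shows "(Len x l \<and> \<not> isE l \<and> Val x l lo \<and> (\<exists>ov. is_partition ov \<and> One ov \<and> Val x ov hi)) \<longleftrightarrow>
     (x \<noteq> [] \<and> l = rep (length x) \<and> lo = sp (x!(length x - 1)) \<and> hi = sp (x!0))"
proof -
  have o: "(\<exists>ov. is_partition ov \<and> One ov \<and> Val x ov hi) \<longleftrightarrow> Val x (rep 1) hi"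
    using One_iff p1 by (metis One_nat_def replicate_0 replicate_Suc)
  show ?thesis unfolding o using Len_iff[OF p(1,2)] Val_iff[OF p(1) p(3), of "length x"] Val_iff[OF p(1) p(4), of 1]
    by (cases x) (auto simp: pp_def)
qed

lemma ProgS_iff:
  assumes p: "is_partition x" "is_partition l" "is_partition lo" "is_partition hi"
  shows "ProgS x l lo hi \<longleftrightarrow> x \<noteq> [] \<and> l = rep (length x) \<and> lo = sp (x!(length x - 1)) \<and> hi = sp (x!0) \<and>
     (\<forall>i. Suc i < length x \<longrightarrow> x!i = x!(Suc i) + 1)"
proof -
  have "StepS x \<longleftrightarrow> (\<forall>i. Suc i < length x \<longrightarrow> x!i = x!(Suc i) + 1)"
    unfolding StepS_def step_gen[OF p(1), of SR] by simp
  then show ?thesis unfolding ProgS_def using frame[OF p] by blast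
qed

lemma prog_top:
  assumes s: "\<forall>i. Suc i < length x \<longrightarrow> x!i = x!(Suc i) + d" and ne: "x \<noteq> []"
  shows "x!0 = x!(length x - 1) + (length x - 1)*d"
proof -
  have "\<forall>j. j < length x \<longrightarrow> x!(length x - 1 - j) = x!(length x - 1) + j*d"
  proof (intro allI)
    fix j show "j < length x \<longrightarrow> x!(length x - 1 - j) = x!(length x - 1) + j*d"
    proof (induction j)
      case (Suc j)
      show ?case
      proof
        assume j: "Suc j < length x"
        have "x!(length x - 1 - Suc j) = x!(Suc (length x - 1 - Suc j)) + d"
          using s j by auto
        also have "Suc (length x - 1 - Suc j) = length x - 1 - j" using j by simp
        finally show "x!(length x - 1 - Suc j) = x!(length x - 1) + Suc j*d" using Suc j by simp
      qed
    qed simp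
  qed
  from this[rule_format, of "length x - 1"] ne show ?thesis by simp
qed

definition mk :: "nat \<Rightarrow> nat \<Rightarrow> nat \<Rightarrow> nat list" where "mk lo d m = map (\<lambda>i. lo + (m - 1 - i)*d) [0..<m]"

lemma mk_part: "0 < lo \<Longrightarrow> is_partition (mk lo d m)"
  unfolding is_partition_def mk_def
  by (auto simp: sorted_wrt_iff_nth_less intro!: mult_le_mono1)

lemma mk_len[simp]: "length (mk lo d m) = m" by (simp add: mk_def)
lemma mk_nth[simp]: "i < m \<Longrightarrow> mk lo d m ! i = lo + (m - 1 - i)*d" by (simp add: mk_def)
lemma mk_step: "\<forall>i. Suc i < length (mk lo d m) \<longrightarrow> mk lo d m!i = mk lo d m!(Suc i) + d"
proof (intro allI impI)
  fix i assume "Suc i < length (mk lo d m)"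
  then have "Suc i < m" "m - Suc i = Suc (m - Suc (Suc i))" by auto
  then show "mk lo d m!i = mk lo d m!(Suc i) + d" by simp
qed
lemma mk_ne: "0 < m \<Longrightarrow> mk lo d m \<noteq> []" by (simp add: mk_def)

lemma T_iff:
  assumes p: "is_partition l"
  shows "T (sp n) l \<longleftrightarrow> l = rep n"
proof
  assume "T (sp n) l"
  then consider "sp n = [] \<and> l = []" | x ov where "is_partition x" "is_partition ov" "One ov" "ProgS x l ov (sp n)"
    unfolding T_def by auto
  then show "l = rep n"
  proof cases
    case 1 then show ?thesis by simp
  next
    case 2
    then have ov: "ov = [1]" using One_iff by auto
    have P: "x \<noteq> [] \<and> l = rep (length x) \<and> ov = sp (x!(length x - 1)) \<and> sp n = sp (x!0) \<and>
     (\<forall>i. Suc i < length x \<longrightarrow> x!i = x!(Suc i) + 1)" using ProgS_iff[OF 2(1) p 2(2)] 2(4) by simp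
    then have "x!0 = x!(length x - 1) + (length x - 1)*1" using prog_top by blast
    then show ?thesis using P ov by auto
  qed
next
  assume l: "l = rep n"
  show "T (sp n) l"
  proof (cases "n = 0")
    case True then show ?thesis using l by (simp add: T_def)
  next
    case False
    have "ProgS (mk 1 1 n) l [1] (sp n)"
      using ProgS_iff[OF mk_part[of 1 1 n] p p1 part_sp] l False mk_step[of 1 1 n] mk_ne[of n 1 1]
      by simp
    moreover have "One [1]" "is_partition [1]" "is_partition (mk 1 1 n)" using One_iff p1 mk_part by auto
    ultimately show ?thesis unfolding T_def by blast
  qed
qed



lemma Add_iff:
  assumes p: "is_partition c"
  shows "Add (sp n) (sp k) c \<longleftrightarrow> c = sp (n+k)"
proof
  assume "Add (sp n) (sp k) c"
  then consider "k = 0 \<and> c = sp n" | l x a' where "is_partition l" "is_partition x" "is_partition a'"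
    "T (sp k) l" "SR (sp n) a'" "ProgS x l a' c"
    unfolding Add_def by auto
  then show "c = sp (n+k)"
  proof cases
    case 1 then show ?thesis by simp
  next
    case 2
    have l: "l = rep k" using T_iff[OF 2(1)] 2(4) by simp
    have a': "a' = sp (Suc n)" using SR_iff[OF part_sp 2(3)] 2(5) by auto
    have P: "x \<noteq> [] \<and> l = rep (length x) \<and> a' = sp (x!(length x - 1)) \<and> c = sp (x!0) \<and>
     (\<forall>i. Suc i < length x \<longrightarrow> x!i = x!(Suc i) + 1)" using ProgS_iff[OF 2(2) 2(1) 2(3) p] 2(6) by simp
    have top: "x!0 = x!(length x - 1) + (length x - 1)*1" using P prog_top[of x 1] by blast
    have lk: "length x = k" using P l by simp
    have last: "x!(length x - 1) = Suc n" using P a' by simp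
    have k0: "0 < k" using P lk by auto
    have "x!0 = Suc n + (k - 1)" using top last lk by simp
    then have "x!0 = n + k" using k0 by simp
    then show ?thesis using P by simp
  qed
next
  assume c: "c = sp (n+k)"
  show "Add (sp n) (sp k) c"
  proof (cases "k = 0")
    case True then show ?thesis using c by (simp add: Add_def)
  next
    case False
    have "ProgS (mk (Suc n) 1 k) (rep k) (sp (Suc n)) c"
      using ProgS_iff[OF mk_part[of "Suc n" 1 k] part_rep[of k] part_sp p] c False mk_step[of "Suc n" 1 k] mk_ne[of k "Suc n" 1]
      by (simp del: replicate_Suc)
    moreover have "is_partition (mk (Suc n) 1 k)" by (rule mk_part) simp
    moreover have "T (sp k) (rep k)" using T_iff by simp
    moreover have "SR (sp n) (sp (Suc n))" by simp
    ultimately show ?thesis unfolding Add_def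
      by (intro disjI2 exI[of _ "rep k"] conjI exI[of _ "mk (Suc n) 1 k"] exI[of _ "sp (Suc n)"]) simp_all
  qed
qed

lemma ProgA_iff:
  assumes p: "is_partition x" "is_partition l" "is_partition lo" "is_partition hi"
  shows "ProgA x l lo hi (sp n) \<longleftrightarrow> x \<noteq> [] \<and> l = rep (length x) \<and> lo = sp (x!(length x - 1)) \<and> hi = sp (x!0) \<and>
     (\<forall>i. Suc i < length x \<longrightarrow> x!i = x!(Suc i) + n)"
proof -
  have "StepA x (sp n) \<longleftrightarrow> (\<forall>i. Suc i < length x \<longrightarrow> x!i = x!(Suc i) + n)"
    unfolding StepA_def step_gen[OF p(1), of "\<lambda>v u. Add v (sp n) u"] by (simp add: Add_iff)
  then show ?thesis unfolding ProgA_def using frame[OF p] by blast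
qed

lemma Mul_iff:
  assumes p: "is_partition c"
  shows "Mul (sp n) (sp k) c \<longleftrightarrow> c = sp (n*k)"
proof
  assume "Mul (sp n) (sp k) c"
  then consider "(n = 0 \<or> k = 0) \<and> c = []" | l x where "n \<noteq> 0" "is_partition l" "is_partition x"
    "T (sp k) l" "ProgA x l (sp n) c (sp n)"
    unfolding Mul_def by auto
  then show "c = sp (n*k)"
  proof cases
    case 1 then show ?thesis by auto
  next
    case 2
    have l: "l = rep k" using T_iff[OF 2(2)] 2(4) by simp
    have P: "x \<noteq> [] \<and> l = rep (length x) \<and> sp n = sp (x!(length x - 1)) \<and> c = sp (x!0) \<and>
     (\<forall>i. Suc i < length x \<longrightarrow> x!i = x!(Suc i) + n)" using ProgA_iff[OF 2(3) 2(2) part_sp p] 2(5) by simp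
    have top: "x!0 = x!(length x - 1) + (length x - 1)*n" using P prog_top[of x n] by blast
    have lk: "length x = k" using P l by simp
    have last: "x!(length x - 1) = n" using P by simp
    obtain k' where k': "k = Suc k'" using P lk by (cases k) auto
    have "x!0 = n + k'*n" using top last lk k' by simp
    then have "x!0 = n * k" using k' by simp
    then show ?thesis using P by simp
  qed
next
  assume c: "c = sp (n*k)"
  show "Mul (sp n) (sp k) c"
  proof (cases "n = 0 \<or> k = 0")
    case True then show ?thesis using c by (auto simp add: Mul_def)
  next
    case False
    then obtain k' where k': "k = Suc k'" by (cases k) auto
    have f: "mk n n k ! 0 = n * k" using k' by simp
    have "ProgA (mk n n k) (rep k) (sp n) c (sp n)"
      using ProgA_iff[OF mk_part[of n n k] part_rep[of k] part_sp p] c False mk_step[of n n k] mk_ne[of k n n] f k'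
      by (simp del: replicate_Suc)
    moreover have "is_partition (mk n n k)" by (rule mk_part) (use False in simp)
    moreover have "T (sp k) (rep k)" using T_iff by simp
    ultimately show ?thesis unfolding Mul_def using False
      by (intro disjI2 conjI exI[of _ "rep k"] exI[of _ "mk n n k"]) simp_all
  qed
qed



definition rowenv :: "(nat \<Rightarrow> nat list) \<Rightarrow> bool" where "rowenv e \<longleftrightarrow> (\<forall>i. \<exists>n. e i = sp n)"
definition DefR :: "nat set \<Rightarrow> ((nat \<Rightarrow> nat list) \<Rightarrow> bool) \<Rightarrow> bool" where
  "DefR Vs S \<longleftrightarrow> (\<exists>\<psi>. yfree \<psi> \<subseteq> Vs \<and> (\<forall>e. rowenv e \<longrightarrow> (sat_Y e \<psi> \<longleftrightarrow> S e)))"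
definition rv :: "nat list \<Rightarrow> nat" where "rv p = pp p 0"
lemma rv_sp[simp]: "rv (sp n) = n" by (simp add: rv_def pp_def single_part_def)

lemma rowenv_upd[simp]: "rowenv e \<Longrightarrow> rowenv (e(x := sp n))" by (simp add: rowenv_def)
lemma rowenv_part: "rowenv e \<Longrightarrow> is_partition (e i)" by (metis rowenv_def part_sp)

lemma DefR_fm: "yfree \<psi> \<subseteq> Vs \<Longrightarrow> (\<And>e. rowenv e \<Longrightarrow> sat_Y e \<psi> = S e) \<Longrightarrow> DefR Vs S"
  unfolding DefR_def by blast

lemma DefR_cong: "DefR Vs S \<Longrightarrow> Vs \<subseteq> W \<Longrightarrow> (\<And>e. rowenv e \<Longrightarrow> S e = Tt e) \<Longrightarrow> DefR W Tt"
  unfolding DefR_def by blast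

lemma DefR_conj: "DefR Vs S \<Longrightarrow> DefR W Tt \<Longrightarrow> DefR (Vs \<union> W) (\<lambda>e. S e \<and> Tt e)"
  unfolding DefR_def by (metis (no_types, lifting) Un_mono sat_Y.simps(4) yfree.simps(4))
lemma DefR_disj: "DefR Vs S \<Longrightarrow> DefR W Tt \<Longrightarrow> DefR (Vs \<union> W) (\<lambda>e. S e \<or> Tt e)"
  unfolding DefR_def by (metis (no_types, lifting) Un_mono sat_Y.simps(5) yfree.simps(5))
lemma DefR_imp: "DefR Vs S \<Longrightarrow> DefR W Tt \<Longrightarrow> DefR (Vs \<union> W) (\<lambda>e. S e \<longrightarrow> Tt e)"
  unfolding DefR_def by (metis (no_types, lifting) Un_mono sat_Y.simps(6) yfree.simps(6))
lemma DefR_neg: "DefR Vs S \<Longrightarrow> DefR Vs (\<lambda>e. \<not> S e)"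
  unfolding DefR_def by (metis sat_Y.simps(3) yfree.simps(3))

lemma DefR_ex: "DefR Vs S \<Longrightarrow> DefR (Vs - {x}) (\<lambda>e. \<exists>n. S (e(x := sp n)))"
proof -
  assume "DefR Vs S"
  then obtain \<psi> where \<psi>: "yfree \<psi> \<subseteq> Vs" "\<And>e. rowenv e \<Longrightarrow> sat_Y e \<psi> \<longleftrightarrow> S e" unfolding DefR_def by blast
  show ?thesis
  proof (rule DefR_fm[of "YEx x (YConj (FRow x) \<psi>)"])
    show "yfree (YEx x (YConj (FRow x) \<psi>)) \<subseteq> Vs - {x}" using \<psi>(1) by auto
  next
    fix e :: "nat \<Rightarrow> nat list" assume e: "rowenv e"
    have "sat_Y e (YEx x (YConj (FRow x) \<psi>)) \<longleftrightarrow> (\<exists>p. is_partition p \<and> isRow p \<and> sat_Y (e(x:=p)) \<psi>)" by simp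
    also have "\<dots> \<longleftrightarrow> (\<exists>n. sat_Y (e(x:=sp n)) \<psi>)" by (rule ex_row)
    also have "\<dots> \<longleftrightarrow> (\<exists>n. S (e(x:=sp n)))" using \<psi>(2) e by simp
    finally show "sat_Y e (YEx x (YConj (FRow x) \<psi>)) = (\<exists>n. S (e(x := sp n)))" .
  qed
qed

lemma DefR_all: "DefR Vs S \<Longrightarrow> DefR (Vs - {x}) (\<lambda>e. \<forall>n. S (e(x := sp n)))"
proof -
  assume "DefR Vs S"
  then obtain \<psi> where \<psi>: "yfree \<psi> \<subseteq> Vs" "\<And>e. rowenv e \<Longrightarrow> sat_Y e \<psi> \<longleftrightarrow> S e" unfolding DefR_def by blast
  show ?thesis
  proof (rule DefR_fm[of "YAll x (YImp (FRow x) \<psi>)"])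
    show "yfree (YAll x (YImp (FRow x) \<psi>)) \<subseteq> Vs - {x}" using \<psi>(1) by auto
  next
    fix e :: "nat \<Rightarrow> nat list" assume e: "rowenv e"
    have "sat_Y e (YAll x (YImp (FRow x) \<psi>)) \<longleftrightarrow> (\<forall>p. is_partition p \<longrightarrow> isRow p \<longrightarrow> sat_Y (e(x:=p)) \<psi>)" by simp
    also have "\<dots> \<longleftrightarrow> (\<forall>n. sat_Y (e(x:=sp n)) \<psi>)" by (rule all_row)
    also have "\<dots> \<longleftrightarrow> (\<forall>n. S (e(x:=sp n)))" using \<psi>(2) e by simp
    finally show "sat_Y e (YAll x (YImp (FRow x) \<psi>)) = (\<forall>n. S (e(x := sp n)))" .
  qed
qed

primrec tb :: "aterm \<Rightarrow> nat" where
  "tb (AVar x) = Suc x"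
| "tb (APlus s t) = max (tb s) (tb t)"
| "tb (ATimes s t) = max (tb s) (tb t)"

lemma tb_bound: "x \<in> atvars t \<Longrightarrow> x < tb t"
  by (induction t) auto

lemma aeval_cong: "(\<And>x. x \<in> atvars t \<Longrightarrow> f x = g x) \<Longrightarrow> aeval f t = aeval g t"
  by (induction t) auto

lemma DefR_Add: "DefR {u,v,z} (\<lambda>e. Add (e u) (e v) (e z))"
  by (rule DefR_fm[OF yfree_FAdd]) simp
lemma DefR_Mul: "DefR {u,v,z} (\<lambda>e. Mul (e u) (e v) (e z))"
  by (rule DefR_fm[OF yfree_FMul]) simp

lemma DefR_bin:
  assumes IHs: "DefR (insert u (atvars s)) (\<lambda>e. e u = sp (aeval (\<lambda>i. rv (e i)) s))"
    and IHt: "DefR (insert v (atvars t)) (\<lambda>e. e v = sp (aeval (\<lambda>i. rv (e i)) t))"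
    and R: "DefR {u,v,z} (\<lambda>e. Rel (e u) (e v) (e z))"
    and Rsem: "\<And>a b c. is_partition c \<Longrightarrow> Rel (sp a) (sp b) c \<longleftrightarrow> c = sp (f a b)"
    and fr: "u \<notin> atvars s" "u \<notin> atvars t" "v \<notin> atvars s" "v \<notin> atvars t" "u \<noteq> v" "u \<noteq> z" "v \<noteq> z"
  shows "DefR (insert z (atvars s \<union> atvars t)) (\<lambda>e. e z = sp (f (aeval (\<lambda>i. rv (e i)) s) (aeval (\<lambda>i. rv (e i)) t)))"
proof -
  have C: "DefR (insert u (atvars s) \<union> (insert v (atvars t) \<union> {u,v,z}))
     (\<lambda>e. e u = sp (aeval (\<lambda>i. rv (e i)) s) \<and> (e v = sp (aeval (\<lambda>i. rv (e i)) t) \<and> Rel (e u) (e v) (e z)))"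
    by (intro DefR_conj IHs IHt R)
  have E: "DefR ((insert u (atvars s) \<union> (insert v (atvars t) \<union> {u,v,z}) - {v}) - {u})
     (\<lambda>e. \<exists>n1. \<exists>n2. (\<lambda>e. e u = sp (aeval (\<lambda>i. rv (e i)) s) \<and> (e v = sp (aeval (\<lambda>i. rv (e i)) t) \<and> Rel (e u) (e v) (e z)))
           (e(u := sp n1, v := sp n2)))"
    by (rule DefR_ex[OF DefR_ex[OF C]])
  show ?thesis
  proof (rule DefR_cong[OF E])
    show "(insert u (atvars s) \<union> (insert v (atvars t) \<union> {u,v,z}) - {v}) - {u} \<subseteq> insert z (atvars s \<union> atvars t)"
      by auto
  next
    fix e :: "nat \<Rightarrow> nat list" assume e: "rowenv e"
    let ?A = "aeval (\<lambda>i. rv (e i)) s" and ?B = "aeval (\<lambda>i. rv (e i)) t"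
    have ev: "\<And>n1 n2. aeval (\<lambda>i. rv ((e(u := sp n1, v := sp n2)) i)) s = ?A"
      by (rule aeval_cong) (use fr in auto)
    have ev2: "\<And>n1 n2. aeval (\<lambda>i. rv ((e(u := sp n1, v := sp n2)) i)) t = ?B"
      by (rule aeval_cong) (use fr in auto)
    have pz: "is_partition (e z)" using rowenv_part[OF e] .
    show "(\<exists>n1 n2. (\<lambda>e. e u = sp (aeval (\<lambda>i. rv (e i)) s) \<and> (e v = sp (aeval (\<lambda>i. rv (e i)) t) \<and> Rel (e u) (e v) (e z)))
           (e(u := sp n1, v := sp n2))) = (e z = sp (f ?A ?B))"
      using fr ev ev2 Rsem[OF pz] by simp
  qed
qed

lemma term_def: "z \<notin> atvars t \<Longrightarrow> DefR (insert z (atvars t)) (\<lambda>e. e z = sp (aeval (\<lambda>i. rv (e i)) t))"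
proof (induction t arbitrary: z)
  case (AVar x)
  show ?case
  proof (rule DefR_fm[of "YEq (YVar z) (YVar x)"])
    show "yfree (YEq (YVar z) (YVar x)) \<subseteq> insert z (atvars (AVar x))" by simp
  next
    fix e :: "nat \<Rightarrow> nat list" assume "rowenv e"
    then obtain m where "e x = sp m" unfolding rowenv_def by blast
    then show "sat_Y e (YEq (YVar z) (YVar x)) = (e z = sp (aeval (\<lambda>i. rv (e i)) (AVar x)))" by simp
  qed
next
  case (APlus s t)
  let ?u = "z + tb s + tb t + 1"
  let ?v = "z + tb s + tb t + 2"
  have fr: "?u \<notin> atvars s" "?u \<notin> atvars t" "?v \<notin> atvars s" "?v \<notin> atvars t"
    using tb_bound[of ?u s] tb_bound[of ?u t] tb_bound[of ?v s] tb_bound[of ?v t] by auto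
  have "DefR (insert z (atvars s \<union> atvars t)) (\<lambda>e. e z = sp (aeval (\<lambda>i. rv (e i)) s + aeval (\<lambda>i. rv (e i)) t))"
    by (rule DefR_bin[where Rel=Add and f="(+)", OF APlus.IH(1)[OF fr(1)] APlus.IH(2)[OF fr(4)] DefR_Add])
       (use fr in \<open>auto simp: Add_iff\<close>)
  then show ?case by simp
next
  case (ATimes s t)
  let ?u = "z + tb s + tb t + 1"
  let ?v = "z + tb s + tb t + 2"
  have fr: "?u \<notin> atvars s" "?u \<notin> atvars t" "?v \<notin> atvars s" "?v \<notin> atvars t"
    using tb_bound[of ?u s] tb_bound[of ?u t] tb_bound[of ?v s] tb_bound[of ?v t] by auto
  have "DefR (insert z (atvars s \<union> atvars t)) (\<lambda>e. e z = sp (aeval (\<lambda>i. rv (e i)) s * aeval (\<lambda>i. rv (e i)) t))"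
    by (rule DefR_bin[where Rel=Mul and f="(*)", OF ATimes.IH(1)[OF fr(1)] ATimes.IH(2)[OF fr(4)] DefR_Mul])
       (use fr in \<open>auto simp: Mul_iff\<close>)
  then show ?case by simp
qed

lemma fm_def: "DefR (afree \<phi>) (\<lambda>e. sat_N (\<lambda>i. rv (e i)) \<phi>)"
proof (induction \<phi>)
  case (AEq s t)
  let ?z = "tb s + tb t"
  have fr: "?z \<notin> atvars s" "?z \<notin> atvars t" using tb_bound[of ?z s] tb_bound[of ?z t] by auto
  have E: "DefR ((insert ?z (atvars s) \<union> insert ?z (atvars t)) - {?z})
     (\<lambda>e. \<exists>n. (\<lambda>e. e ?z = sp (aeval (\<lambda>i. rv (e i)) s) \<and> e ?z = sp (aeval (\<lambda>i. rv (e i)) t)) (e(?z := sp n)))"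
    by (rule DefR_ex[OF DefR_conj[OF term_def[OF fr(1)] term_def[OF fr(2)]]])
  show ?case
  proof (rule DefR_cong[OF E])
    show "(insert ?z (atvars s) \<union> insert ?z (atvars t)) - {?z} \<subseteq> afree (AEq s t)" by auto
  next
    fix e :: "nat \<Rightarrow> nat list" assume e: "rowenv e"
    have ev: "\<And>n. aeval (\<lambda>i. rv ((e(?z := sp n)) i)) s = aeval (\<lambda>i. rv (e i)) s"
      by (rule aeval_cong) (use fr in auto)
    have ev2: "\<And>n. aeval (\<lambda>i. rv ((e(?z := sp n)) i)) t = aeval (\<lambda>i. rv (e i)) t"
      by (rule aeval_cong) (use fr in auto)
    show "(\<exists>n. (\<lambda>e. e ?z = sp (aeval (\<lambda>i. rv (e i)) s) \<and> e ?z = sp (aeval (\<lambda>i. rv (e i)) t)) (e(?z := sp n)))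
        = sat_N (\<lambda>i. rv (e i)) (AEq s t)"
      using ev ev2 by simp
  qed
next
  case (ANeg f) then show ?case using DefR_neg by fastforce
next
  case (AConj f g) then show ?case using DefR_conj by fastforce
next
  case (ADisj f g) then show ?case using DefR_disj by fastforce
next
  case (AImp f g) then show ?case using DefR_imp by fastforce
next
  case (AEx x f)
  have "DefR (afree f - {x}) (\<lambda>e. \<exists>n. sat_N (\<lambda>i. rv ((e(x := sp n)) i)) f)"
    by (rule DefR_ex[OF AEx.IH])
  moreover have "\<And>e n. (\<lambda>i. rv ((e(x := sp n)) i)) = (\<lambda>i. rv (e i))(x := n)" by auto
  ultimately show ?case by simp
next
  case (AAll x f)
  have "DefR (afree f - {x}) (\<lambda>e. \<forall>n. sat_N (\<lambda>i. rv ((e(x := sp n)) i)) f)"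
    by (rule DefR_all[OF AAll.IH])
  moreover have "\<And>e n. (\<lambda>i. rv ((e(x := sp n)) i)) = (\<lambda>i. rv (e i))(x := n)" by auto
  ultimately show ?case by simp
qed

theorem lemma4p2:
  fixes k :: nat and \<phi> :: afm
  assumes "afree \<phi> \<subseteq> {..<k}"
  shows "\<exists>\<psi> :: yfm. yfree \<psi> \<subseteq> {..<k} \<and>
           (\<forall>ns :: nat list. length ns = k \<longrightarrow>
              (sat_N (\<lambda>i. ns ! i) \<phi> \<longleftrightarrow> sat_Y (\<lambda>i. single_part (ns ! i)) \<psi>))"
proof -
  obtain \<psi> where \<psi>: "yfree \<psi> \<subseteq> afree \<phi>" "\<And>e. rowenv e \<Longrightarrow> sat_Y e \<psi> \<longleftrightarrow> sat_N (\<lambda>i. rv (e i)) \<phi>"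
    using fm_def[of \<phi>] unfolding DefR_def by blast
  show ?thesis
  proof (intro exI conjI allI impI)
    show "yfree \<psi> \<subseteq> {..<k}" using \<psi>(1) assms by blast
  next
    fix ns :: "nat list"
    have "rowenv (\<lambda>i. single_part (ns ! i))" by (auto simp: rowenv_def)
    then show "sat_N (\<lambda>i. ns ! i) \<phi> = sat_Y (\<lambda>i. single_part (ns ! i)) \<psi>" using \<psi>(2) by simp
  qed
qed


end
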